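(* Let $H=(V,E,w)$ be a hypergraph with at least one hyperedge, and let $\gamma_1=\min\{D(f): f\in\mathbb{R}^n,\ \sum_v\deg(v)f(v)^2>0\}$, where $D(f)=\frac{\sum_{e\in E}w(e)\big(\max_{u\in e}f(u)+\min_{v\in e}f(v)\big)^2}{\sum_{v\in V}\deg(v)f(v)^2}$. Then there are disjoint sets $L,R\subset V$ with $\mathrm{vol}(L\cup R)>0$ such that $$\beta_H(L,R)\le\sqrt{2\gamma_1}.$$
   Context: A hypergraph $H=(V,E,w)$ has vertex set $V$ with $|V|=n$, hyperedges $E$ (subsets of $V$), weights $w:E\to\mathbb{R}_{>0}$; $\deg(v)=\sum_{e\ni v}w(e)$, $\mathrm{vol}(S)=\sum_{v\in S}\deg(v)$. For $A,B,C\subseteq V$, $w(A,B\mid C)=\sum_{e\in E}w(e)[e\cap A\ne\emptyset\wedge e\cap B\ne\emptyset\wedge e\cap C=\emptyset]$ and $w(A\mid C)=w(A,A\mid C)$. Writing $\overline{X}=V\setminus X$, the bipartiteness ratio of disjoint $L,R$ (with $\mathrm{vol}(L\cup R)>0$) is $\beta_H(L,R)=\frac{2w(L\mid\overline{L})+2w(R\mid\overline{R})+w(L,\overline{L\cup R}\mid R)+w(R,\overline{L\cup R}\mid L)}{\mathrm{vol}(L\cup R)}$. The quantity $\gamma_1$ is the minimum eigenvalue of the paper's hypergraph operator $D_H^{-1}J_H$. *)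

theory Defs
  imports Complex_Main
begin

definition hypergraph :: "'a set \<Rightarrow> 'a set set \<Rightarrow> ('a set \<Rightarrow> real) \<Rightarrow> bool" where
  "hypergraph V E w \<longleftrightarrow> finite V \<and> (\<forall>e\<in>E. e \<subseteq> V \<and> e \<noteq> {} \<and> w e > 0)"

definition hdeg :: "'a set set \<Rightarrow> ('a set \<Rightarrow> real) \<Rightarrow> 'a \<Rightarrow> real" where
  "hdeg E w v = (\<Sum>e\<in>{e\<in>E. v \<in> e}. w e)"

definition hvol :: "'a set set \<Rightarrow> ('a set \<Rightarrow> real) \<Rightarrow> 'a set \<Rightarrow> real" where
  "hvol E w S = (\<Sum>v\<in>S. hdeg E w v)"

definition wcut :: "'a set set \<Rightarrow> ('a set \<Rightarrow> real) \<Rightarrow> 'a set \<Rightarrow> 'a set \<Rightarrow> 'a set \<Rightarrow> real" where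
  "wcut E w A B C = (\<Sum>e\<in>{e\<in>E. e \<inter> A \<noteq> {} \<and> e \<inter> B \<noteq> {} \<and> e \<inter> C = {}}. w e)"

definition bipartiteness :: "'a set \<Rightarrow> 'a set set \<Rightarrow> ('a set \<Rightarrow> real) \<Rightarrow> 'a set \<Rightarrow> 'a set \<Rightarrow> real" where
  "bipartiteness V E w L R =
     (2 * wcut E w L L (V - L) + 2 * wcut E w R R (V - R)
      + wcut E w L (V - (L \<union> R)) R + wcut E w R (V - (L \<union> R)) L)
     / hvol E w (L \<union> R)"

definition Dnum :: "'a set set \<Rightarrow> ('a set \<Rightarrow> real) \<Rightarrow> ('a \<Rightarrow> real) \<Rightarrow> real" where
  "Dnum E w f = (\<Sum>e\<in>E. w e * (Max (f ` e) + Min (f ` e))\<^sup>2)"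

definition Dden :: "'a set \<Rightarrow> 'a set set \<Rightarrow> ('a set \<Rightarrow> real) \<Rightarrow> ('a \<Rightarrow> real) \<Rightarrow> real" where
  "Dden V E w f = (\<Sum>v\<in>V. hdeg E w v * (f v)\<^sup>2)"

definition gamma1 :: "'a set \<Rightarrow> 'a set set \<Rightarrow> ('a set \<Rightarrow> real) \<Rightarrow> real" where
  "gamma1 V E w = Inf {Dnum E w f / Dden V E w f | f. Dden V E w f > 0}"

end

theory Submission
  imports Defs "HOL-Analysis.Convex"
begin


definition mu :: "real set \<Rightarrow> real \<Rightarrow> real" where
  "mu T s = s - Max (insert 0 {s'\<in>T. s' < s})"

lemma mu_pos:
  assumes "finite T" "\<forall>s\<in>T. s > 0" "s \<in> T"
  shows "mu T s > 0"
proof -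
  have "Max (insert 0 {s'\<in>T. s' < s}) < s"
    using assms by (subst Max_less_iff) auto
  thus ?thesis unfolding mu_def by simp
qed

lemma mu_tele:
  assumes "finite T" "\<forall>s\<in>T. s > 0" "x \<in> insert 0 T"
  shows "(\<Sum>s\<in>T. mu T s * (if s \<le> x then 1 else 0)) = x"
proof -
  have "(\<Sum>s\<in>{s\<in>T. s \<le> x}. mu T s) = x" if "x \<in> insert 0 T" for x
    using that
  proof (induction "card {s\<in>T. s \<le> x}" arbitrary: x rule: less_induct)
    case less
    show ?case
    proof (cases "x = 0")
      case True
      then have "{s\<in>T. s \<le> x} = {}" using assms by force
      then have "(\<Sum>s\<in>{s\<in>T. s \<le> x}. mu T s) = 0" by (simp only:) simp
      then show ?thesis using True by simp
    next
      case False
      then have xT: "x \<in> T" using less.prems by auto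
      define p where "p = Max (insert 0 {s'\<in>T. s' < x})"
      have fin: "finite {s'\<in>T. s' < x}" using assms by auto
      have pin: "p \<in> insert 0 {s'\<in>T. s' < x}" unfolding p_def
        by (rule Max_in) (use fin in auto)
      have px: "p < x" using pin assms xT by auto
      have p0: "p \<in> insert 0 T" using pin by auto
      have ple: "\<And>s. s \<in> T \<Longrightarrow> s < x \<Longrightarrow> s \<le> p" unfolding p_def
        using fin by (intro Max_ge) auto
      have eq: "{s\<in>T. s \<le> x} = insert x {s\<in>T. s \<le> p}"
        using xT px ple by force
      have xn: "x \<notin> {s\<in>T. s \<le> p}" using px by auto
      have "card {s\<in>T. s \<le> p} < card {s\<in>T. s \<le> x}"
        unfolding eq using xn assms(1) by simp
      then have IH: "(\<Sum>s\<in>{s\<in>T. s \<le> p}. mu T s) = p" using less.hyps p0 by blast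
      have "(\<Sum>s\<in>{s\<in>T. s \<le> x}. mu T s) = mu T x + (\<Sum>s\<in>{s\<in>T. s \<le> p}. mu T s)"
        unfolding eq using xn assms(1) by simp
      also have "\<dots> = x" using IH unfolding mu_def p_def by simp
      finally show ?thesis .
    qed
  qed
  moreover have "(\<Sum>s\<in>T. mu T s * (if s \<le> x then 1 else 0)) = (\<Sum>s\<in>{s\<in>T. s \<le> x}. mu T s)"
    using assms(1) by (simp add: sum.inter_filter[symmetric] if_distrib cong: if_cong)
  ultimately show ?thesis using assms(3) by simp
qed

lemma mu_interval:
  assumes "finite T" "\<forall>s\<in>T. s > 0" "x \<in> insert 0 T" "y \<in> insert 0 T"
  shows "(\<Sum>s\<in>T. mu T s * (if x < s \<and> s \<le> y then 1 else 0)) = max 0 (y - x)"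
proof (cases "x \<le> y")
  case True
  have "(\<Sum>s\<in>T. mu T s * (if x < s \<and> s \<le> y then 1 else 0)) =
     (\<Sum>s\<in>T. mu T s * (if s \<le> y then 1 else 0) - mu T s * (if s \<le> x then 1 else 0))"
    using True by (intro sum.cong) auto
  also have "\<dots> = y - x" using mu_tele[OF assms(1,2,3)] mu_tele[OF assms(1,2,4)]
    by (simp add: sum_subtractf)
  finally show ?thesis using True by simp
next
  case False
  then show ?thesis by (simp, intro sum.neutral) auto
qed



lemma edge_facts:
  fixes f :: "'a \<Rightarrow> real"
  assumes "e \<subseteq> V" "finite e" "e \<noteq> {}" "s > 0"
  defines "L \<equiv> {v\<in>V. 0 < f v \<and> s \<le> (f v)^2}" and "R \<equiv> {v\<in>V. f v < 0 \<and> s \<le> (f v)^2}"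
  defines "a \<equiv> Max (f ` e)" and "b \<equiv> Min (f ` e)"
  shows "e \<inter> L \<noteq> {} \<and> e \<inter> L \<noteq> {} \<and> e \<inter> (V - L) = {} \<Longrightarrow> b > 0 \<and> s \<le> b^2"
  and "e \<inter> R \<noteq> {} \<and> e \<inter> R \<noteq> {} \<and> e \<inter> (V - R) = {} \<Longrightarrow> a < 0 \<and> s \<le> a^2"
  and "e \<inter> L \<noteq> {} \<and> e \<inter> (V - (L \<union> R)) \<noteq> {} \<and> e \<inter> R = {} \<Longrightarrow> a > 0 \<and> b^2 < s \<and> s \<le> a^2"
  and "e \<inter> R \<noteq> {} \<and> e \<inter> (V - (L \<union> R)) \<noteq> {} \<and> e \<inter> L = {} \<Longrightarrow> b < 0 \<and> a^2 < s \<and> s \<le> b^2"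
proof -
  have fin: "finite (f ` e)" "f ` e \<noteq> {}" using assms by auto
  have "a \<in> f ` e" unfolding a_def using fin by (rule Max_in)
  then obtain ua where ua: "ua \<in> e" "f ua = a" by auto
  have "b \<in> f ` e" unfolding b_def using fin by (rule Min_in)
  then obtain ub where ub: "ub \<in> e" "f ub = b" by auto
  have le: "\<And>v. v \<in> e \<Longrightarrow> b \<le> f v \<and> f v \<le> a" unfolding a_def b_def using fin by auto
  have sq: "\<And>x y::real. 0 \<le> x \<Longrightarrow> x \<le> y \<Longrightarrow> x^2 \<le> y^2" by (simp add: power_mono)
  show "e \<inter> L \<noteq> {} \<and> e \<inter> L \<noteq> {} \<and> e \<inter> (V - L) = {} \<Longrightarrow> b > 0 \<and> s \<le> b^2"
  proof -
    assume h: "e \<inter> L \<noteq> {} \<and> e \<inter> L \<noteq> {} \<and> e \<inter> (V - L) = {}"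
    then have "ub \<in> L" using ub assms(1) by auto
    then show ?thesis using ub unfolding L_def by auto
  qed
  show "e \<inter> R \<noteq> {} \<and> e \<inter> R \<noteq> {} \<and> e \<inter> (V - R) = {} \<Longrightarrow> a < 0 \<and> s \<le> a^2"
  proof -
    assume h: "e \<inter> R \<noteq> {} \<and> e \<inter> R \<noteq> {} \<and> e \<inter> (V - R) = {}"
    then have "ua \<in> R" using ua assms(1) by auto
    then show ?thesis using ua unfolding R_def by auto
  qed
  show "e \<inter> L \<noteq> {} \<and> e \<inter> (V - (L \<union> R)) \<noteq> {} \<and> e \<inter> R = {} \<Longrightarrow> a > 0 \<and> b^2 < s \<and> s \<le> a^2"
  proof -
    assume h: "e \<inter> L \<noteq> {} \<and> e \<inter> (V - (L \<union> R)) \<noteq> {} \<and> e \<inter> R = {}"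
    then obtain u where u: "u \<in> e" "u \<in> L" by auto
    from h obtain m where m: "m \<in> e" "m \<in> V" "m \<notin> L" "m \<notin> R" by auto
    have ubR: "ub \<notin> R" using h ub by auto
    have a0: "a > 0" using u le[of u] unfolding L_def by auto
    have "s \<le> (f u)^2" using u unfolding L_def by auto
    also have "\<dots> \<le> a^2" using u le[of u] unfolding L_def by (intro sq) auto
    finally have sa: "s \<le> a^2" .
    have "b^2 < s"
    proof (cases "b < 0")
      case True
      then show ?thesis using ubR ub assms(1) unfolding R_def by auto
    next
      case False
      have fm: "(f m)^2 < s"
        using m assms(4) unfolding L_def R_def by (cases "f m = 0") auto
      have "b^2 \<le> (f m)^2" using False le[OF m(1)] by (intro sq) auto
      then show ?thesis using fm by linarith
    qed
    then show ?thesis using a0 sa by auto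
  qed
  show "e \<inter> R \<noteq> {} \<and> e \<inter> (V - (L \<union> R)) \<noteq> {} \<and> e \<inter> L = {} \<Longrightarrow> b < 0 \<and> a^2 < s \<and> s \<le> b^2"
  proof -
    assume h: "e \<inter> R \<noteq> {} \<and> e \<inter> (V - (L \<union> R)) \<noteq> {} \<and> e \<inter> L = {}"
    then obtain u where u: "u \<in> e" "u \<in> R" by auto
    from h obtain m where m: "m \<in> e" "m \<in> V" "m \<notin> L" "m \<notin> R" by auto
    have uaL: "ua \<notin> L" using h ua by auto
    have b0: "b < 0" using u le[of u] unfolding R_def by auto
    have "s \<le> (f u)^2" using u unfolding R_def by auto
    also have "\<dots> = (- f u)^2" by simp
    also have "\<dots> \<le> (-b)^2" using u le[of u] unfolding R_def by (intro sq) auto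
    finally have sb: "s \<le> b^2" by simp
    have "a^2 < s"
    proof (cases "a > 0")
      case True
      then show ?thesis using uaL ua assms(1) unfolding L_def by auto
    next
      case False
      have fm: "(f m)^2 < s"
        using m assms(4) unfolding L_def R_def by (cases "f m = 0") auto
      have "(-a)^2 \<le> (- f m)^2" using False le[OF m(1)] by (intro sq) auto
      then show ?thesis using fm by simp
    qed
    then show ?thesis using b0 sb by auto
  qed
qed

definition gfun :: "real \<Rightarrow> real \<Rightarrow> real \<Rightarrow> real" where
  "gfun a b s = 2 * (if b > 0 then 1 else 0) * (if s \<le> b^2 then 1 else 0)
     + 2 * (if a < 0 then 1 else 0) * (if s \<le> a^2 then 1 else 0)
     + (if a > 0 then 1 else 0) * (if b^2 < s \<and> s \<le> a^2 then 1 else 0)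
     + (if b < 0 then 1 else 0) * (if a^2 < s \<and> s \<le> b^2 then 1 else 0)"

definition Qfun :: "real \<Rightarrow> real \<Rightarrow> real" where
  "Qfun a b = 2 * (if b > 0 then 1 else 0) * b^2 + 2 * (if a < 0 then 1 else 0) * a^2
     + (if a > 0 then 1 else 0) * max 0 (a^2 - b^2) + (if b < 0 then 1 else 0) * max 0 (b^2 - a^2)"

lemma gfun_sum:
  assumes "finite T" "\<forall>s\<in>T. s > 0" "a^2 \<in> insert 0 T" "b^2 \<in> insert 0 T"
  shows "(\<Sum>s\<in>T. mu T s * gfun a b s) = Qfun a b"
proof -
  have "(\<Sum>s\<in>T. mu T s * gfun a b s) =
    2 * (if b > 0 then 1 else 0) * (\<Sum>s\<in>T. mu T s * (if s \<le> b^2 then 1 else 0))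
    + 2 * (if a < 0 then 1 else 0) * (\<Sum>s\<in>T. mu T s * (if s \<le> a^2 then 1 else 0))
    + (if a > 0 then 1 else 0) * (\<Sum>s\<in>T. mu T s * (if b^2 < s \<and> s \<le> a^2 then 1 else 0))
    + (if b < 0 then 1 else 0) * (\<Sum>s\<in>T. mu T s * (if a^2 < s \<and> s \<le> b^2 then 1 else 0))"
    unfolding gfun_def by (simp add: sum.distrib sum_distrib_left algebra_simps)
  also have "\<dots> = Qfun a b" unfolding Qfun_def
    by (simp add: mu_tele[OF assms(1,2,3)] mu_tele[OF assms(1,2,4)]
        mu_interval[OF assms(1,2,3,4)] mu_interval[OF assms(1,2,4,3)])
  finally show ?thesis .
qed

lemma Qfun_bound:
  fixes a b K :: real
  assumes "b \<le> a" "K \<ge> a^2 + b^2 \<or> (a = b \<and> K \<ge> a^2)"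
  shows "Qfun a b \<le> \<bar>a + b\<bar> * sqrt (2 * K)"
proof -
  have Q0: "Qfun a b \<ge> 0" unfolding Qfun_def by auto
  have K0: "K \<ge> 0" using assms(2) by (auto intro: order_trans[rotated])
  have main: "(Qfun a b)^2 \<le> (a + b)^2 * (2 * K)"
  proof -
    consider "b > 0" | "a < 0" | "b \<le> 0" "0 \<le> a" using assms(1) by linarith
    then show ?thesis
    proof cases
      case 1
      then have Q: "Qfun a b = a^2 + b^2" unfolding Qfun_def using assms(1) by auto
      show ?thesis
      proof (cases "a = b")
        case True
        then have "(Qfun a b)^2 = (a+b)^2 * (a^2)" unfolding Q by (simp add: power2_eq_square algebra_simps)
        also have "\<dots> \<le> (a+b)^2 * (2 * K)"
        proof (intro mult_left_mono)
          show "a^2 \<le> 2 * K" using assms(2) True zero_le_power2[of a] zero_le_power2[of b] by (smt (verit))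
        qed simp
        finally show ?thesis .
      next
        case False
        then have KK: "K \<ge> a^2 + b^2" using assms(2) by auto
        have "(Qfun a b)^2 = (a^2+b^2) * (a^2+b^2)" unfolding Q by (simp add: power2_eq_square)
        also have "\<dots> \<le> (2 * (a+b)^2) * (a^2+b^2)"
          using 1 assms(1) by (intro mult_right_mono) (auto simp: power2_eq_square algebra_simps)
        also have "\<dots> \<le> (2 * (a+b)^2) * K" using KK by (intro mult_left_mono) auto
        finally show ?thesis by (simp add: algebra_simps)
      qed
    next
      case 2
      have ab2: "(-a)^2 \<le> (-b)^2" using 2 assms(1) by (intro power_mono) auto
      then have Q: "Qfun a b = a^2 + b^2" unfolding Qfun_def using assms(1) 2 by auto
      show ?thesis
      proof (cases "a = b")
        case True
        then have "(Qfun a b)^2 = (a+b)^2 * (a^2)" unfolding Q by (simp add: power2_eq_square algebra_simps)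
        also have "\<dots> \<le> (a+b)^2 * (2 * K)"
        proof (intro mult_left_mono)
          show "a^2 \<le> 2 * K" using assms(2) True zero_le_power2[of a] zero_le_power2[of b] by (smt (verit))
        qed simp
        finally show ?thesis .
      next
        case False
        then have KK: "K \<ge> a^2 + b^2" using assms(2) by auto
        have "(Qfun a b)^2 = (a^2+b^2) * (a^2+b^2)" unfolding Q by (simp add: power2_eq_square)
        also have "\<dots> \<le> (2 * (a+b)^2) * (a^2+b^2)"
          using 2 assms(1) mult_nonpos_nonpos[of a b] zero_le_square[of a] zero_le_square[of b] by (intro mult_right_mono) (auto simp: power2_eq_square algebra_simps)
        also have "\<dots> \<le> (2 * (a+b)^2) * K" using KK by (intro mult_left_mono) auto
        finally show ?thesis by (simp add: algebra_simps)
      qed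
    next
      case 3
      have Q: "Qfun a b = \<bar>a^2 - b^2\<bar>" unfolding Qfun_def using 3 by auto
      have "(Qfun a b)^2 = (a+b)^2 * (a-b)^2" unfolding Q
        by (simp add: power2_eq_square algebra_simps)
      also have "\<dots> \<le> (a+b)^2 * (2 * K)"
      proof (intro mult_left_mono)
        show "(a-b)^2 \<le> 2 * K"
        proof (cases "a = b")
          case True then show ?thesis using K0 by simp
        next
          case False
          then have KK: "K \<ge> a^2 + b^2" using assms(2) by auto
          have "(a-b)^2 \<le> 2 * (a^2+b^2)"
            using sum_squares_ge_zero[of "a+b" 0] by (simp add: power2_eq_square algebra_simps)
          then show ?thesis using KK by (smt (verit))
        qed
      qed simp
      finally show ?thesis .
    qed
  qed
  have "Qfun a b = sqrt ((Qfun a b)^2)" using Q0 by simp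
  also have "\<dots> \<le> sqrt ((a + b)^2 * (2 * K))" using main by (rule real_sqrt_le_mono)
  also have "\<dots> = \<bar>a + b\<bar> * sqrt (2 * K)" by (simp add: real_sqrt_mult)
  finally show ?thesis .
qed



lemma wcut_eq:
  assumes "finite E"
  shows "wcut E w A B C = (\<Sum>e\<in>E. w e * (if e \<inter> A \<noteq> {} \<and> e \<inter> B \<noteq> {} \<and> e \<inter> C = {} then 1 else 0))"
  unfolding wcut_def using assms by (simp add: sum.inter_filter if_distrib cong: if_cong)

lemma edge_sum_swap:
  assumes "finite V" "finite E" "\<forall>e\<in>E. e \<subseteq> V"
  shows "(\<Sum>e\<in>E. w e * (\<Sum>v\<in>e. g v)) = (\<Sum>v\<in>V. hdeg E w v * g v)"
proof -
  have "(\<Sum>e\<in>E. w e * (\<Sum>v\<in>e. g v)) = (\<Sum>e\<in>E. \<Sum>v\<in>V. if v \<in> e then w e * g v else 0)"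
  proof (intro sum.cong refl)
    fix e assume "e \<in> E"
    then have "e = {v\<in>V. v \<in> e}" using assms by auto
    then have "(\<Sum>v\<in>e. g v) = (\<Sum>v\<in>{v\<in>V. v \<in> e}. g v)" by simp
    also have "\<dots> = (\<Sum>v\<in>V. if v \<in> e then g v else 0)" using assms(1) by (simp add: sum.inter_filter)
    finally show "w e * (\<Sum>v\<in>e. g v) = (\<Sum>v\<in>V. if v \<in> e then w e * g v else 0)"
      by (simp add: sum_distrib_left if_distrib cong: if_cong)
  qed
  also have "\<dots> = (\<Sum>v\<in>V. \<Sum>e\<in>E. if v \<in> e then w e * g v else 0)" by (rule sum.swap)
  also have "\<dots> = (\<Sum>v\<in>V. hdeg E w v * g v)"
  proof (intro sum.cong refl)
    fix v
    have "hdeg E w v = (\<Sum>e\<in>E. if v \<in> e then w e else 0)"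
      unfolding hdeg_def using assms(2) by (simp add: sum.inter_filter)
    then show "(\<Sum>e\<in>E. if v \<in> e then w e * g v else 0) = hdeg E w v * g v"
      by (simp add: sum_distrib_right) (intro sum.cong, auto)
  qed
  finally show ?thesis .
qed



lemma ind_le: "(P \<Longrightarrow> Q \<and> R) \<Longrightarrow> (if P then 1 else 0) \<le> (if Q then 1 else 0) * (if R then 1 else (0::real))"
  by auto

lemma main_f:
  fixes V :: "'a set" and E :: "'a set set" and w :: "'a set \<Rightarrow> real" and f :: "'a \<Rightarrow> real"
  assumes hg: "hypergraph V E w" and pos: "Dden V E w f > 0"
  shows "\<exists>L R. L \<subseteq> V \<and> R \<subseteq> V \<and> L \<inter> R = {} \<and> hvol E w (L \<union> R) > 0 \<and>
           bipartiteness V E w L R \<le> sqrt (2 * (Dnum E w f / Dden V E w f))"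
proof -
  have finV: "finite V" using hg unfolding hypergraph_def by auto
  have Esub: "\<forall>e\<in>E. e \<subseteq> V" and Ene: "\<forall>e\<in>E. e \<noteq> {}" and wpos: "\<forall>e\<in>E. w e > 0"
    using hg unfolding hypergraph_def by auto
  have finE: "finite E" using finV Esub by (meson Pow_iff finite_Pow_iff finite_subset subsetI)
  have fine: "\<And>e. e \<in> E \<Longrightarrow> finite e" using finV Esub finite_subset by blast
  have hdeg0: "\<And>v. hdeg E w v \<ge> 0" unfolding hdeg_def using wpos by (intro sum_nonneg) auto
  define T where "T = (\<lambda>v. (f v)^2) ` {v\<in>V. f v \<noteq> 0}"
  have finT: "finite T" unfolding T_def using finV by auto
  have Tpos: "\<forall>s\<in>T. s > 0" unfolding T_def by auto
  have inT: "\<And>v. v \<in> V \<Longrightarrow> (f v)^2 \<in> insert 0 T" unfolding T_def by auto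
  define Lt where "Lt s = {v\<in>V. 0 < f v \<and> s \<le> (f v)^2}" for s
  define Rt where "Rt s = {v\<in>V. f v < 0 \<and> s \<le> (f v)^2}" for s
  define a where "a e = Max (f ` e)" for e
  define b where "b e = Min (f ` e)" for e
  define K where "K e = (\<Sum>v\<in>e. (f v)^2)" for e
  define N where "N s = 2 * wcut E w (Lt s) (Lt s) (V - Lt s) + 2 * wcut E w (Rt s) (Rt s) (V - Rt s)
      + wcut E w (Lt s) (V - (Lt s \<union> Rt s)) (Rt s) + wcut E w (Rt s) (V - (Lt s \<union> Rt s)) (Lt s)" for s
  define Dv where "Dv s = hvol E w (Lt s \<union> Rt s)" for s
  define c where "c = sqrt (2 * (Dnum E w f / Dden V E w f))"
  have ab_in: "\<And>e. e \<in> E \<Longrightarrow> a e \<in> f ` e \<and> b e \<in> f ` e"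
    unfolding a_def b_def using fine Ene by auto
  have ab2: "\<And>e. e \<in> E \<Longrightarrow> (a e)^2 \<in> insert 0 T \<and> (b e)^2 \<in> insert 0 T"
  proof -
    fix e assume e: "e \<in> E"
    from ab_in[OF e] obtain u v where uv: "u \<in> e" "a e = f u" "v \<in> e" "b e = f v" by blast
    then have "u \<in> V" "v \<in> V" using Esub e by auto
    then show "(a e)^2 \<in> insert 0 T \<and> (b e)^2 \<in> insert 0 T" using inT uv by simp
  qed
  have wcut0: "\<And>A B C. wcut E w A B C \<ge> 0" unfolding wcut_def using wpos by (intro sum_nonneg) auto
  have N0: "\<And>s. N s \<ge> 0" unfolding N_def using wcut0 by (simp add: add_nonneg_nonneg)
  have Dv0: "\<And>s. Dv s \<ge> 0" unfolding Dv_def hvol_def using hdeg0 by (intro sum_nonneg) auto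
  have N_le: "N s \<le> (\<Sum>e\<in>E. w e * gfun (a e) (b e) s)" if s0: "s > 0" for s
  proof -
    have "N s = (\<Sum>e\<in>E. w e * (
         2 * (if e \<inter> Lt s \<noteq> {} \<and> e \<inter> Lt s \<noteq> {} \<and> e \<inter> (V - Lt s) = {} then 1 else 0)
       + 2 * (if e \<inter> Rt s \<noteq> {} \<and> e \<inter> Rt s \<noteq> {} \<and> e \<inter> (V - Rt s) = {} then 1 else 0)
       + (if e \<inter> Lt s \<noteq> {} \<and> e \<inter> (V - (Lt s \<union> Rt s)) \<noteq> {} \<and> e \<inter> Rt s = {} then 1 else 0)
       + (if e \<inter> Rt s \<noteq> {} \<and> e \<inter> (V - (Lt s \<union> Rt s)) \<noteq> {} \<and> e \<inter> Lt s = {} then 1 else 0)))"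
      unfolding N_def wcut_eq[OF finE] by (simp add: sum.distrib sum_distrib_left algebra_simps)
    also have "\<dots> \<le> (\<Sum>e\<in>E. w e * gfun (a e) (b e) s)"
    proof (intro sum_mono mult_left_mono)
      fix e assume e: "e \<in> E"
      then have w0: "w e \<ge> 0" using wpos by auto
      have esub: "e \<subseteq> V" and ene: "e \<noteq> {}" using e Esub Ene by auto
      note ef = edge_facts[OF esub fine[OF e] ene s0, of f, folded Lt_def Rt_def a_def b_def]
      have ef1: "e \<inter> Lt s \<noteq> {} \<and> e \<inter> Lt s \<noteq> {} \<and> e \<inter> (V - Lt s) = {} \<Longrightarrow> b e > 0 \<and> s \<le> (b e)^2"
        using ef(1) by blast
      have ef2: "e \<inter> Rt s \<noteq> {} \<and> e \<inter> Rt s \<noteq> {} \<and> e \<inter> (V - Rt s) = {} \<Longrightarrow> a e < 0 \<and> s \<le> (a e)^2"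
        using ef(2) by blast
      have ef3: "e \<inter> Lt s \<noteq> {} \<and> e \<inter> (V - (Lt s \<union> Rt s)) \<noteq> {} \<and> e \<inter> Rt s = {} \<Longrightarrow> a e > 0 \<and> (b e)^2 < s \<and> s \<le> (a e)^2"
        using ef(3) by blast
      have ef4: "e \<inter> Rt s \<noteq> {} \<and> e \<inter> (V - (Lt s \<union> Rt s)) \<noteq> {} \<and> e \<inter> Lt s = {} \<Longrightarrow> b e < 0 \<and> (a e)^2 < s \<and> s \<le> (b e)^2"
        using ef(4) by blast
      show "2 * (if e \<inter> Lt s \<noteq> {} \<and> e \<inter> Lt s \<noteq> {} \<and> e \<inter> (V - Lt s) = {} then 1 else 0)
       + 2 * (if e \<inter> Rt s \<noteq> {} \<and> e \<inter> Rt s \<noteq> {} \<and> e \<inter> (V - Rt s) = {} then 1 else 0)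
       + (if e \<inter> Lt s \<noteq> {} \<and> e \<inter> (V - (Lt s \<union> Rt s)) \<noteq> {} \<and> e \<inter> Rt s = {} then 1 else 0)
       + (if e \<inter> Rt s \<noteq> {} \<and> e \<inter> (V - (Lt s \<union> Rt s)) \<noteq> {} \<and> e \<inter> Lt s = {} then 1 else 0)
       \<le> gfun (a e) (b e) s"
      proof -
        have i1: "(if e \<inter> Lt s \<noteq> {} \<and> e \<inter> Lt s \<noteq> {} \<and> e \<inter> (V - Lt s) = {} then 1 else 0)
          \<le> (if b e > 0 then 1 else 0) * (if s \<le> (b e)^2 then 1 else (0::real))"
          by (rule ind_le[OF ef1])
        have i2: "(if e \<inter> Rt s \<noteq> {} \<and> e \<inter> Rt s \<noteq> {} \<and> e \<inter> (V - Rt s) = {} then 1 else 0)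
          \<le> (if a e < 0 then 1 else 0) * (if s \<le> (a e)^2 then 1 else (0::real))"
          by (rule ind_le[OF ef2])
        have i3: "(if e \<inter> Lt s \<noteq> {} \<and> e \<inter> (V - (Lt s \<union> Rt s)) \<noteq> {} \<and> e \<inter> Rt s = {} then 1 else 0)
          \<le> (if a e > 0 then 1 else 0) * (if (b e)^2 < s \<and> s \<le> (a e)^2 then 1 else (0::real))"
          by (rule ind_le[OF ef3])
        have i4: "(if e \<inter> Rt s \<noteq> {} \<and> e \<inter> (V - (Lt s \<union> Rt s)) \<noteq> {} \<and> e \<inter> Lt s = {} then 1 else 0)
          \<le> (if b e < 0 then 1 else 0) * (if (a e)^2 < s \<and> s \<le> (b e)^2 then 1 else (0::real))"
          by (rule ind_le[OF ef4])
        show ?thesis unfolding gfun_def using i1 i2 i3 i4 by linarith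
      qed
    qed (use wpos in auto)
    finally show ?thesis .
  qed
  have NS: "(\<Sum>s\<in>T. mu T s * N s) \<le> (\<Sum>e\<in>E. w e * Qfun (a e) (b e))"
  proof -
    have "(\<Sum>s\<in>T. mu T s * N s) \<le> (\<Sum>s\<in>T. mu T s * (\<Sum>e\<in>E. w e * gfun (a e) (b e) s))"
      using N_le Tpos mu_pos[OF finT Tpos] by (intro sum_mono mult_left_mono) (auto intro: less_imp_le)
    also have "\<dots> = (\<Sum>e\<in>E. w e * (\<Sum>s\<in>T. mu T s * gfun (a e) (b e) s))"
      by (simp add: sum_distrib_left sum.swap[of _ T] algebra_simps)
    also have "\<dots> = (\<Sum>e\<in>E. w e * Qfun (a e) (b e))"
      using gfun_sum[OF finT Tpos] ab2 by (intro sum.cong refl) auto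
    finally show ?thesis .
  qed
  have K0: "\<And>e. K e \<ge> 0" unfolding K_def by (intro sum_nonneg) auto
  have QK: "(\<Sum>e\<in>E. w e * Qfun (a e) (b e)) \<le> (\<Sum>e\<in>E. w e * (\<bar>a e + b e\<bar> * sqrt (2 * K e)))"
  proof (intro sum_mono mult_left_mono)
    fix e assume e: "e \<in> E"
    have fin1: "finite (f ` e)" "f ` e \<noteq> {}" using fine[OF e] Ene e by auto
    from ab_in[OF e] obtain ua ub where u: "ua \<in> e" "a e = f ua" "ub \<in> e" "b e = f ub" by blast
    have le: "\<And>v. v \<in> e \<Longrightarrow> b e \<le> f v \<and> f v \<le> a e" unfolding a_def b_def using fin1 by auto
    show "Qfun (a e) (b e) \<le> \<bar>a e + b e\<bar> * sqrt (2 * K e)"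
    proof (rule Qfun_bound)
      show "b e \<le> a e" using le[OF u(1)] by linarith
      show "K e \<ge> (a e)^2 + (b e)^2 \<or> (a e = b e \<and> K e \<ge> (a e)^2)"
      proof (cases "a e = b e")
        case True
        have "(f ua)^2 \<le> K e" unfolding K_def using fine[OF e] u(1)
          by (intro member_le_sum) auto
        then show ?thesis using True u by simp
      next
        case False
        then have "ua \<noteq> ub" using u by auto
        then have "(\<Sum>v\<in>{ua, ub}. (f v)^2) = (f ua)^2 + (f ub)^2" by simp
        moreover have "(\<Sum>v\<in>{ua, ub}. (f v)^2) \<le> K e" unfolding K_def using fine[OF e] u
          by (intro sum_mono2) auto
        ultimately show ?thesis using u by simp
      qed
    qed
  qed (use wpos in auto)
  have CS: "(\<Sum>e\<in>E. w e * (\<bar>a e + b e\<bar> * sqrt (2 * K e))) \<le> sqrt (Dnum E w f * (2 * Dden V E w f))"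
  proof -
    define x where "x e = sqrt (w e) * \<bar>a e + b e\<bar>" for e
    define y where "y e = sqrt (w e) * sqrt (2 * K e)" for e
    have 1: "(\<Sum>e\<in>E. w e * (\<bar>a e + b e\<bar> * sqrt (2 * K e))) = (\<Sum>e\<in>E. x e * y e)"
    proof (intro sum.cong refl)
      fix e assume "e \<in> E"
      then have "sqrt (w e) * sqrt (w e) = w e" using wpos by (simp add: less_imp_le)
      then show "w e * (\<bar>a e + b e\<bar> * sqrt (2 * K e)) = x e * y e"
        unfolding x_def y_def by (metis mult.assoc mult.left_commute)
    qed
    have 2: "(\<Sum>e\<in>E. (x e)^2) = Dnum E w f"
      unfolding Dnum_def
    proof (intro sum.cong refl)
      fix e assume "e \<in> E"
      then have "(sqrt (w e))^2 = w e" using wpos by (simp add: less_imp_le)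
      then show "(x e)^2 = w e * (Max (f ` e) + Min (f ` e))\<^sup>2"
        unfolding x_def a_def b_def by (simp add: power_mult_distrib)
    qed
    have 3: "(\<Sum>e\<in>E. (y e)^2) = 2 * Dden V E w f"
    proof -
      have "(\<Sum>e\<in>E. (y e)^2) = (\<Sum>e\<in>E. 2 * (w e * (\<Sum>v\<in>e. (f v)^2)))"
      proof (intro sum.cong refl)
        fix e assume "e \<in> E"
        then have "(sqrt (w e))^2 = w e" using wpos by (simp add: less_imp_le)
        then show "(y e)^2 = 2 * (w e * (\<Sum>v\<in>e. (f v)^2))"
          unfolding y_def K_def using K0[of e] unfolding K_def by (simp add: power_mult_distrib)
      qed
      also have "\<dots> = 2 * (\<Sum>e\<in>E. w e * (\<Sum>v\<in>e. (f v)^2))" by (simp add: sum_distrib_left)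
      also have "\<dots> = 2 * Dden V E w f"
        unfolding Dden_def using edge_sum_swap[OF finV finE Esub, of w "\<lambda>v. (f v)^2"] by simp
      finally show ?thesis .
    qed
    have "(\<Sum>e\<in>E. x e * y e)^2 \<le> (\<Sum>e\<in>E. (x e)^2) * (\<Sum>e\<in>E. (y e)^2)"
      by (rule Cauchy_Schwarz_ineq_sum)
    then have "(\<Sum>e\<in>E. x e * y e) \<le> sqrt ((\<Sum>e\<in>E. (x e)^2) * (\<Sum>e\<in>E. (y e)^2))"
      by (rule real_le_rsqrt)
    then show ?thesis using 1 2 3 by simp
  qed
  have cD: "sqrt (Dnum E w f * (2 * Dden V E w f)) = c * Dden V E w f"
  proof -
    have "c * Dden V E w f = sqrt (2 * (Dnum E w f / Dden V E w f)) * sqrt ((Dden V E w f)^2)"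
      unfolding c_def using pos by simp
    also have "\<dots> = sqrt (2 * (Dnum E w f / Dden V E w f) * (Dden V E w f)^2)"
      by (rule real_sqrt_mult[symmetric])
    also have "2 * (Dnum E w f / Dden V E w f) * (Dden V E w f)^2 = Dnum E w f * (2 * Dden V E w f)"
      using pos by (simp add: field_simps power2_eq_square)
    finally show ?thesis by simp
  qed
  have Dv_eq: "Dv s = (\<Sum>v\<in>V. hdeg E w v * (if s \<le> (f v)^2 then 1 else 0))" if "s \<in> T" for s
  proof -
    have "Lt s \<union> Rt s = {v\<in>V. s \<le> (f v)^2}"
    proof -
      have s0: "s > 0" using Tpos that by auto
      have "\<And>x::real. s \<le> x^2 \<Longrightarrow> x \<noteq> 0" using s0 by auto
      then show ?thesis unfolding Lt_def Rt_def by (auto simp: linorder_neq_iff)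
    qed
    then show ?thesis unfolding Dv_def hvol_def using finV
      by (simp add: sum.inter_filter if_distrib cong: if_cong)
  qed
  have DvS: "(\<Sum>s\<in>T. mu T s * Dv s) = Dden V E w f"
  proof -
    have "(\<Sum>s\<in>T. mu T s * Dv s) = (\<Sum>s\<in>T. \<Sum>v\<in>V. hdeg E w v * (mu T s * (if s \<le> (f v)^2 then 1 else 0)))"
      using Dv_eq by (simp add: sum_distrib_left mult_ac)
    also have "\<dots> = (\<Sum>v\<in>V. hdeg E w v * (\<Sum>s\<in>T. mu T s * (if s \<le> (f v)^2 then 1 else 0)))"
      by (subst sum.swap) (simp add: sum_distrib_left)
    also have "\<dots> = (\<Sum>v\<in>V. hdeg E w v * (f v)^2)"
      using mu_tele[OF finT Tpos] inT by simp
    finally show ?thesis unfolding Dden_def .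
  qed
  have total: "(\<Sum>s\<in>T. mu T s * (N s - c * Dv s)) \<le> 0"
  proof -
    have "(\<Sum>s\<in>T. mu T s * (N s - c * Dv s)) = (\<Sum>s\<in>T. mu T s * N s) - c * (\<Sum>s\<in>T. mu T s * Dv s)"
      by (simp add: algebra_simps sum_subtractf sum_distrib_left)
    also have "\<dots> \<le> c * Dden V E w f - c * Dden V E w f"
      unfolding DvS using NS QK CS cD by linarith
    finally show ?thesis by simp
  qed
  have "\<exists>v0. v0 \<in> V \<and> hdeg E w v0 * (f v0)^2 > 0"
  proof (rule ccontr)
    assume "\<nexists>v0. v0 \<in> V \<and> hdeg E w v0 * (f v0)^2 > 0"
    then have "Dden V E w f \<le> 0" unfolding Dden_def by (intro sum_nonpos) (auto simp: not_less)
    then show False using pos by simp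
  qed
  then obtain v0 where v0: "v0 \<in> V" "hdeg E w v0 * (f v0)^2 > 0" by blast
  define s0 where "s0 = (f v0)^2"
  have fv0: "f v0 \<noteq> 0" and hv0: "hdeg E w v0 > 0" using v0 hdeg0[of v0]
    by (auto simp: zero_less_mult_iff)
  have s0T: "s0 \<in> T" unfolding s0_def T_def using v0 fv0 by auto
  have "v0 \<in> Lt s0 \<union> Rt s0" unfolding Lt_def Rt_def s0_def using v0 fv0 by (auto simp: linorder_neq_iff)
  then have "hdeg E w v0 \<le> Dv s0" unfolding Dv_def hvol_def using finV hdeg0
    by (intro member_le_sum) (auto simp: Lt_def Rt_def)
  then have Dvs0: "Dv s0 > 0" using hv0 by linarith
  have "\<exists>s\<in>T. Dv s > 0 \<and> N s \<le> c * Dv s"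
  proof (rule ccontr)
    assume H: "\<not> (\<exists>s\<in>T. Dv s > 0 \<and> N s \<le> c * Dv s)"
    have nn: "\<forall>s\<in>T. 0 \<le> mu T s * (N s - c * Dv s)"
    proof
      fix s assume s: "s \<in> T"
      have "0 \<le> N s - c * Dv s"
      proof (cases "Dv s > 0")
        case True then show ?thesis using H s by auto
      next
        case False then have "Dv s = 0" using Dv0[of s] by simp
        then show ?thesis using N0[of s] by simp
      qed
      then show "0 \<le> mu T s * (N s - c * Dv s)" using mu_pos[OF finT Tpos s] by simp
    qed
    have "0 < mu T s0 * (N s0 - c * Dv s0)"
      using H s0T Dvs0 mu_pos[OF finT Tpos s0T] by auto
    then have "0 < (\<Sum>s\<in>T. mu T s * (N s - c * Dv s))"
      by (rule sum_pos2[OF finT s0T]) (use nn in auto)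
    then show False using total by simp
  qed
  then obtain s where s: "s \<in> T" "Dv s > 0" "N s \<le> c * Dv s" by blast
  show ?thesis
  proof (intro exI conjI)
    show "Lt s \<subseteq> V" "Rt s \<subseteq> V" unfolding Lt_def Rt_def by auto
    show "Lt s \<inter> Rt s = {}" unfolding Lt_def Rt_def by auto
    show "hvol E w (Lt s \<union> Rt s) > 0" using s(2) unfolding Dv_def .
    have "bipartiteness V E w (Lt s) (Rt s) = N s / Dv s" unfolding bipartiteness_def N_def Dv_def ..
    also have "\<dots> \<le> c" using s(2,3) by (simp add: divide_le_eq)
    finally show "bipartiteness V E w (Lt s) (Rt s) \<le> sqrt (2 * (Dnum E w f / Dden V E w f))"
      unfolding c_def .
  qed
qed


theorem theorem4:
  fixes V :: "'a set" and E :: "'a set set" and w :: "'a set \<Rightarrow> real"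
  assumes "hypergraph V E w" and "E \<noteq> {}"
  shows "\<exists>L R. L \<subseteq> V \<and> R \<subseteq> V \<and> L \<inter> R = {} \<and> hvol E w (L \<union> R) > 0 \<and>
           bipartiteness V E w L R \<le> sqrt (2 * gamma1 V E w)"
proof -
  have hg: "hypergraph V E w" by fact
  have finV: "finite V" using hg unfolding hypergraph_def by auto
  have Esub: "\<forall>e\<in>E. e \<subseteq> V" and Ene: "\<forall>e\<in>E. e \<noteq> {}" and wpos: "\<forall>e\<in>E. w e > 0"
    using hg unfolding hypergraph_def by auto
  have finE: "finite E" using finV Esub by (meson Pow_iff finite_Pow_iff finite_subset subsetI)
  have hdeg0: "\<And>v. hdeg E w v \<ge> 0" unfolding hdeg_def using wpos by (intro sum_nonneg) auto
  define X where "X = {Dnum E w f / Dden V E w f | f. Dden V E w f > 0}"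
  have g: "gamma1 V E w = Inf X" unfolding gamma1_def X_def ..
  obtain e0 where e0: "e0 \<in> E" using assms(2) by blast
  then obtain v0 where v0: "v0 \<in> e0" using Ene by blast
  have v0V: "v0 \<in> V" using v0 e0 Esub by blast
  have "w e0 \<le> hdeg E w v0" unfolding hdeg_def using e0 v0 finE wpos
    by (intro member_le_sum) auto
  then have hv0: "hdeg E w v0 > 0" using wpos e0 by fastforce
  have "hdeg E w v0 \<le> Dden V E w (\<lambda>_. 1)" unfolding Dden_def using finV v0V hdeg0
    by simp (intro member_le_sum, auto)
  then have D1: "Dden V E w (\<lambda>_. 1) > 0" using hv0 by linarith
  have Xne: "X \<noteq> {}" unfolding X_def using D1 by blast
  have X0: "\<And>x. x \<in> X \<Longrightarrow> 0 \<le> x"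
  proof -
    fix x assume "x \<in> X"
    then obtain f where f: "x = Dnum E w f / Dden V E w f" "Dden V E w f > 0" unfolding X_def by blast
    have "Dnum E w f \<ge> 0" unfolding Dnum_def using wpos by (intro sum_nonneg) auto
    then show "0 \<le> x" using f by simp
  qed
  define P where "P = {(L, R). L \<subseteq> V \<and> R \<subseteq> V \<and> L \<inter> R = {} \<and> hvol E w (L \<union> R) > 0}"
  have finP: "finite P"
  proof (rule finite_subset)
    show "P \<subseteq> Pow V \<times> Pow V" unfolding P_def by auto
    show "finite (Pow V \<times> Pow V)" using finV by simp
  qed
  define \<beta> where "\<beta> = (\<lambda>(L, R). bipartiteness V E w L R)"
  have good: "\<exists>p\<in>P. \<beta> p \<le> sqrt (2 * x)" if xX: "x \<in> X" for x
  proof -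
    obtain f where f: "x = Dnum E w f / Dden V E w f" "Dden V E w f > 0" using xX unfolding X_def by blast
    from main_f[OF hg f(2)] obtain L R where "L \<subseteq> V \<and> R \<subseteq> V \<and> L \<inter> R = {} \<and> hvol E w (L \<union> R) > 0 \<and>
           bipartiteness V E w L R \<le> sqrt (2 * (Dnum E w f / Dden V E w f))" by blast
    then show ?thesis unfolding P_def \<beta>_def f(1) by auto
  qed
  have Pne: "P \<noteq> {}" using good[of "Dnum E w (\<lambda>_. 1) / Dden V E w (\<lambda>_. 1)"] D1 unfolding X_def by blast
  define B where "B = Min (\<beta> ` P)"
  have "B \<in> \<beta> ` P" unfolding B_def using finP Pne by (intro Min_in) auto
  then obtain p0 where p0: "p0 \<in> P" "\<beta> p0 = B" by auto
  have Ble: "\<And>p. p \<in> P \<Longrightarrow> B \<le> \<beta> p" unfolding B_def using finP by auto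
  have BX: "\<And>x. x \<in> X \<Longrightarrow> B \<le> sqrt (2 * x)" using good Ble by (meson order_trans)
  have inf0: "0 \<le> Inf X" using Xne X0 by (intro cInf_greatest) auto
  have "B \<le> sqrt (2 * Inf X)"
  proof (cases "B \<le> 0")
    case True then show ?thesis using inf0 by (meson order_trans real_sqrt_ge_zero zero_le_mult_iff zero_le_numeral)
  next
    case False
    have "B^2 / 2 \<le> x" if "x \<in> X" for x
    proof -
      have "B^2 \<le> (sqrt (2 * x))^2" using BX[OF that] False by (intro power_mono) auto
      then show ?thesis using X0[OF that] by simp
    qed
    then have "B^2 / 2 \<le> Inf X" using Xne by (intro cInf_greatest) auto
    then have "B^2 \<le> 2 * Inf X" by simp
    then have "sqrt (B^2) \<le> sqrt (2 * Inf X)" by (rule real_sqrt_le_mono)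
    then show ?thesis using False by simp
  qed
  then show ?thesis using p0 unfolding P_def \<beta>_def g by auto
qed


end
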